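(* Let $(H,\mu_H,\Delta_H)$ be a bialgebra and $(C,\mu_C)$ a right $H$-module algebra in the usual sense with action $c\otimes h\mapsto c\cdot h$; let $\alpha_H:H\to H$ be a bijective bialgebra endomorphism and $\alpha_C:C\to C$ a bijective algebra endomorphism with $\alpha_C(c\cdot h)=\alpha_C(c)\cdot\alpha_H(h)$ for all $h,c$. Let $H\# C$ be the usual smash product, $H\otimes C$ with $(h\# c)(h'\# c')=hh'_1\#(c\cdot h'_2)c'$. Then $\alpha_H\otimes\alpha_C$ is an algebra endomorphism of $H\# C$ and the Hom-associative algebras $(H\# C)_{\alpha_H\otimes\alpha_C}$ and $H_{\alpha_H}\# C_{\alpha_C}$ coincide, where the latter is the Hom-smash product formed with respect to the right action $c\triangleleft h:=\alpha_C(c\cdot h)$ of the Hom-bialgebra $H_{\alpha_H}$ on $C_{\alpha_C}$.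
   Context: Over a field $k$, (co)units not assumed; a bialgebra is an associative algebra with coassociative multiplicative $\Delta(h)=h_1\otimes h_2$; a right module algebra in the usual sense satisfies $c\cdot(hh')=(c\cdot h)\cdot h'$, $(cc')\cdot h=(c\cdot h_1)(c'\cdot h_2)$. For an associative algebra $(A,\mu)$ with algebra endomorphism $\alpha$, $A_\alpha=(A,\alpha\circ\mu,\alpha)$ is Hom-associative ($\alpha(aa')=\alpha(a)\alpha(a')$, $\alpha(a)(a'a'')=(aa')\alpha(a'')$); $H_{\alpha_H}=(H,\alpha_H\circ\mu_H,\Delta_H\circ\alpha_H,\alpha_H)$ is a Hom-bialgebra and $C_{\alpha_C}$ is a right $H_{\alpha_H}$-module Hom-algebra via $\triangleleft$. For a Hom-bialgebra $(H,\mu_H,\Delta_H,\alpha_H)$ and right $H$-module Hom-algebra $(C,\mu_C,\alpha_C)$ with action $\cdot$ and $\alpha_H,\alpha_C$ bijective, the Hom-smash product $H\# C$ is $H\otimes C$ with structure map $\alpha_H\otimes\alpha_C$ and product $(h\# c)(h'\# c')=h\alpha_H^{-1}(h'_1)\#(\alpha_C^{-1}(c)\cdot\alpha_H^{-2}(h'_2))c'$. *)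

theory Defs
  imports Complex_Main
begin

text \<open>An element of the free k-vector space on a set X is a finitely supported
  function X to k.  The tensor product V (x) W is the free space on V x W modulo the
  subspace spanned by the bilinearity relations; we work with representatives and
  the induced equality relation.\<close>

definition supp :: "('a \<Rightarrow> 'k::zero) \<Rightarrow> 'a set" where
  "supp f = {p. f p \<noteq> 0}"

definition fsupp :: "('a \<Rightarrow> 'k::zero) \<Rightarrow> bool" where
  "fsupp f \<longleftrightarrow> finite (supp f)"

text \<open>basis vector (Dirac function) of the free space: the pure tensor x\<close>
definition bas :: "'a \<Rightarrow> 'a \<Rightarrow> 'k::{zero,one}" where
  "bas x = (\<lambda>p. if p = x then 1 else 0)"

text \<open>linear extension of a map on basis elements into another free space\<close>
definition fext :: "('a \<Rightarrow> 'k::comm_ring_1) \<Rightarrow> ('a \<Rightarrow> 'b \<Rightarrow> 'k) \<Rightarrow> 'b \<Rightarrow> 'k" where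
  "fext f \<phi> = (\<lambda>q. \<Sum>p\<in>supp f. f p * \<phi> p q)"

text \<open>linear extension of a map on basis elements into a vector space with scaling s\<close>
definition vext :: "('k \<Rightarrow> 'v \<Rightarrow> 'v) \<Rightarrow> ('a \<Rightarrow> 'k::zero) \<Rightarrow> ('a \<Rightarrow> 'v::comm_monoid_add) \<Rightarrow> 'v" where
  "vext s f \<phi> = (\<Sum>p\<in>supp f. s (f p) (\<phi> p))"

inductive_set tens2_rel ::
  "('k::field \<Rightarrow> 'a::ab_group_add \<Rightarrow> 'a) \<Rightarrow> ('k \<Rightarrow> 'b::ab_group_add \<Rightarrow> 'b) \<Rightarrow> ('a \<times> 'b \<Rightarrow> 'k) set"
  for sA sB where
  zero: "(\<lambda>_. 0) \<in> tens2_rel sA sB"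
| addL: "(\<lambda>p. bas (x + x', y) p - bas (x, y) p - bas (x', y) p) \<in> tens2_rel sA sB"
| addR: "(\<lambda>p. bas (x, y + y') p - bas (x, y) p - bas (x, y') p) \<in> tens2_rel sA sB"
| smulL: "(\<lambda>p. bas (sA a x, y) p - a * bas (x, y) p) \<in> tens2_rel sA sB"
| smulR: "(\<lambda>p. bas (x, sB a y) p - a * bas (x, y) p) \<in> tens2_rel sA sB"
| add: "f \<in> tens2_rel sA sB \<Longrightarrow> g \<in> tens2_rel sA sB \<Longrightarrow> (\<lambda>p. f p + g p) \<in> tens2_rel sA sB"
| smul: "f \<in> tens2_rel sA sB \<Longrightarrow> (\<lambda>p. a * f p) \<in> tens2_rel sA sB"

definition tens2_eq ::
  "('k::field \<Rightarrow> 'a::ab_group_add \<Rightarrow> 'a) \<Rightarrow> ('k \<Rightarrow> 'b::ab_group_add \<Rightarrow> 'b) \<Rightarrow>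
   ('a \<times> 'b \<Rightarrow> 'k) \<Rightarrow> ('a \<times> 'b \<Rightarrow> 'k) \<Rightarrow> bool" where
  "tens2_eq sA sB f g \<longleftrightarrow> (\<lambda>p. f p - g p) \<in> tens2_rel sA sB"

inductive_set tens3_rel ::
  "('k::field \<Rightarrow> 'a::ab_group_add \<Rightarrow> 'a) \<Rightarrow> ('k \<Rightarrow> 'b::ab_group_add \<Rightarrow> 'b) \<Rightarrow>
   ('k \<Rightarrow> 'c::ab_group_add \<Rightarrow> 'c) \<Rightarrow> ('a \<times> 'b \<times> 'c \<Rightarrow> 'k) set"
  for sA sB sC where
  zero: "(\<lambda>_. 0) \<in> tens3_rel sA sB sC"
| add1: "(\<lambda>p. bas (x + x', y, z) p - bas (x, y, z) p - bas (x', y, z) p) \<in> tens3_rel sA sB sC"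
| add2: "(\<lambda>p. bas (x, y + y', z) p - bas (x, y, z) p - bas (x, y', z) p) \<in> tens3_rel sA sB sC"
| add3: "(\<lambda>p. bas (x, y, z + z') p - bas (x, y, z) p - bas (x, y, z') p) \<in> tens3_rel sA sB sC"
| smul1: "(\<lambda>p. bas (sA a x, y, z) p - a * bas (x, y, z) p) \<in> tens3_rel sA sB sC"
| smul2: "(\<lambda>p. bas (x, sB a y, z) p - a * bas (x, y, z) p) \<in> tens3_rel sA sB sC"
| smul3: "(\<lambda>p. bas (x, y, sC a z) p - a * bas (x, y, z) p) \<in> tens3_rel sA sB sC"
| add: "f \<in> tens3_rel sA sB sC \<Longrightarrow> g \<in> tens3_rel sA sB sC \<Longrightarrow> (\<lambda>p. f p + g p) \<in> tens3_rel sA sB sC"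
| smul: "f \<in> tens3_rel sA sB sC \<Longrightarrow> (\<lambda>p. a * f p) \<in> tens3_rel sA sB sC"

definition tens3_eq ::
  "('k::field \<Rightarrow> 'a::ab_group_add \<Rightarrow> 'a) \<Rightarrow> ('k \<Rightarrow> 'b::ab_group_add \<Rightarrow> 'b) \<Rightarrow>
   ('k \<Rightarrow> 'c::ab_group_add \<Rightarrow> 'c) \<Rightarrow> ('a \<times> 'b \<times> 'c \<Rightarrow> 'k) \<Rightarrow> ('a \<times> 'b \<times> 'c \<Rightarrow> 'k) \<Rightarrow> bool" where
  "tens3_eq sA sB sC f g \<longleftrightarrow> (\<lambda>p. f p - g p) \<in> tens3_rel sA sB sC"

text \<open>f (x) g applied to a representative of A (x) B\<close>
definition tmap2 :: "('a \<Rightarrow> 'a') \<Rightarrow> ('b \<Rightarrow> 'b') \<Rightarrow> ('a \<times> 'b \<Rightarrow> 'k::comm_ring_1) \<Rightarrow> ('a' \<times> 'b' \<Rightarrow> 'k)" where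
  "tmap2 f g X = fext X (\<lambda>(x, y). bas (f x, g y))"

section \<open>Algebras, bialgebras, module algebras (no (co)units)\<close>

text \<open>associative k-algebra: the type is an (associative, non-unital) ring, sA is a
  k-vector-space structure and multiplication is k-bilinear\<close>
definition kalgebra :: "('k::field \<Rightarrow> 'a::ring \<Rightarrow> 'a) \<Rightarrow> bool" where
  "kalgebra sA \<longleftrightarrow> Vector_Spaces.vector_space sA \<and>
     (\<forall>a x y. sA a (x * y) = sA a x * y \<and> sA a (x * y) = x * sA a y)"

text \<open>Delta is a linear map H to H (x) H (given on representatives), coassociative and
  multiplicative\<close>
definition bialgebra :: "('k::field \<Rightarrow> 'h::ring \<Rightarrow> 'h) \<Rightarrow> ('h \<Rightarrow> ('h \<times> 'h \<Rightarrow> 'k)) \<Rightarrow> bool" where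
  "bialgebra sH Delta \<longleftrightarrow> kalgebra sH \<and>
     (\<forall>h. fsupp (Delta h)) \<and>
     (\<forall>h h'. tens2_eq sH sH (Delta (h + h')) (\<lambda>p. Delta h p + Delta h' p)) \<and>
     (\<forall>a h. tens2_eq sH sH (Delta (sH a h)) (\<lambda>p. a * Delta h p)) \<and>
     (\<forall>h. tens3_eq sH sH sH
            (fext (Delta h) (\<lambda>(x, y). fext (Delta x) (\<lambda>(u, v). bas (u, v, y))))
            (fext (Delta h) (\<lambda>(x, y). fext (Delta y) (\<lambda>(u, v). bas (x, u, v))))) \<and>
     (\<forall>h h'. tens2_eq sH sH (Delta (h * h'))
            (fext (Delta h) (\<lambda>(x, y). fext (Delta h') (\<lambda>(x', y'). bas (x * x', y * y')))))"

text \<open>right H-module algebra in the usual sense; the action c (x) h to c.h is a linear map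
  C (x) H to C, i.e. bilinear\<close>
definition right_module_algebra ::
  "('k::field \<Rightarrow> 'h::ring \<Rightarrow> 'h) \<Rightarrow> ('h \<Rightarrow> ('h \<times> 'h \<Rightarrow> 'k)) \<Rightarrow>
   ('k \<Rightarrow> 'c::ring \<Rightarrow> 'c) \<Rightarrow> ('c \<Rightarrow> 'h \<Rightarrow> 'c) \<Rightarrow> bool" where
  "right_module_algebra sH Delta sC act \<longleftrightarrow> kalgebra sC \<and>
     (\<forall>c c' h. act (c + c') h = act c h + act c' h) \<and>
     (\<forall>c h h'. act c (h + h') = act c h + act c h') \<and>
     (\<forall>a c h. act (sC a c) h = sC a (act c h)) \<and>
     (\<forall>a c h. act c (sH a h) = sC a (act c h)) \<and>
     (\<forall>c h h'. act c (h * h') = act (act c h) h') \<and>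
     (\<forall>c c' h. act (c * c') h = vext sC (Delta h) (\<lambda>(x, y). act c x * act c' y))"

definition bialg_endo :: "('k::field \<Rightarrow> 'h::ring \<Rightarrow> 'h) \<Rightarrow> ('h \<Rightarrow> ('h \<times> 'h \<Rightarrow> 'k)) \<Rightarrow> ('h \<Rightarrow> 'h) \<Rightarrow> bool" where
  "bialg_endo sH Delta \<alpha> \<longleftrightarrow> Vector_Spaces.linear sH sH \<alpha> \<and> (\<forall>x y. \<alpha> (x * y) = \<alpha> x * \<alpha> y) \<and>
     (\<forall>h. tens2_eq sH sH (Delta (\<alpha> h)) (tmap2 \<alpha> \<alpha> (Delta h)))"

definition alg_endo :: "('k::field \<Rightarrow> 'c::ring \<Rightarrow> 'c) \<Rightarrow> ('c \<Rightarrow> 'c) \<Rightarrow> bool" where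
  "alg_endo sC \<alpha> \<longleftrightarrow> Vector_Spaces.linear sC sC \<alpha> \<and> (\<forall>x y. \<alpha> (x * y) = \<alpha> x * \<alpha> y)"

text \<open>usual smash product H # C: (h#c)(h'#c') = h h'_1 # (c.h'_2) c', extended bilinearly
  to representatives of H (x) C\<close>
definition smash_mult ::
  "('h \<Rightarrow> ('h \<times> 'h \<Rightarrow> 'k::comm_ring_1)) \<Rightarrow> ('c \<Rightarrow> 'h \<Rightarrow> 'c) \<Rightarrow>
   ('h::times \<times> 'c::times \<Rightarrow> 'k) \<Rightarrow> ('h \<times> 'c \<Rightarrow> 'k) \<Rightarrow> ('h \<times> 'c \<Rightarrow> 'k)" where
  "smash_mult Delta act X Y =
     fext X (\<lambda>(h, c). fext Y (\<lambda>(h', c'). fext (Delta h') (\<lambda>(x, y). bas (h * x, act c y * c'))))"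

text \<open>Hom-smash product of a Hom-bialgebra (H, muH, DeltaH, alphaH) and a right module
  Hom-algebra (C, muC, alphaC) with action act:
  (h#c)(h'#c') = muH h (alphaH^-1 h'_1) # muC (act (alphaC^-1 c) (alphaH^-2 h'_2)) c'\<close>
definition hom_smash_mult ::
  "('h \<Rightarrow> 'h \<Rightarrow> 'h) \<Rightarrow> ('h \<Rightarrow> ('h \<times> 'h \<Rightarrow> 'k::comm_ring_1)) \<Rightarrow> ('h \<Rightarrow> 'h) \<Rightarrow>
   ('c \<Rightarrow> 'c \<Rightarrow> 'c) \<Rightarrow> ('c \<Rightarrow> 'c) \<Rightarrow> ('c \<Rightarrow> 'h \<Rightarrow> 'c) \<Rightarrow>
   ('h \<times> 'c \<Rightarrow> 'k) \<Rightarrow> ('h \<times> 'c \<Rightarrow> 'k) \<Rightarrow> ('h \<times> 'c \<Rightarrow> 'k)" where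
  "hom_smash_mult muH DeltaH \<alpha>H muC \<alpha>C act X Y =
     fext X (\<lambda>(h, c). fext Y (\<lambda>(h', c'). fext (DeltaH h') (\<lambda>(x, y).
        bas (muH h (inv \<alpha>H x), muC (act (inv \<alpha>C c) (inv \<alpha>H (inv \<alpha>H y))) c'))))"

end

theory Submission
  imports Defs
begin

lemma supp_bas: "supp (bas x :: _ \<Rightarrow> 'k::zero_neq_one) = {x}"
  by (auto simp: supp_def bas_def)

lemma fsupp_bas[simp]: "fsupp (bas x :: _ \<Rightarrow> 'k::zero_neq_one)"
  by (simp add: fsupp_def supp_bas)

lemma fext_superset:
  assumes "finite S" "supp X \<subseteq> S"
  shows "fext X \<phi> = (\<lambda>q. \<Sum>p\<in>S. X p * \<phi> p q)"
proof
  fix q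
  show "fext X \<phi> q = (\<Sum>p\<in>S. X p * \<phi> p q)"
    unfolding fext_def
    by (rule sum.mono_neutral_left) (use assms in \<open>auto simp: supp_def\<close>)
qed

lemma fext_bas[simp]: "fext (bas x :: _ \<Rightarrow> 'k::comm_ring_1) \<phi> = \<phi> x"
  by (simp add: fext_def supp_bas, simp add: bas_def)

lemma fext_add:
  assumes "fsupp X" "fsupp Y"
  shows "fext (\<lambda>p. X p + Y p) \<phi> = (\<lambda>q. fext X \<phi> q + fext Y \<phi> q)"
proof -
  let ?S = "supp X \<union> supp Y"
  have f: "finite ?S" using assms by (simp add: fsupp_def)
  have "fext (\<lambda>p. X p + Y p) \<phi> = (\<lambda>q. \<Sum>p\<in>?S. (X p + Y p) * \<phi> p q)"
    by (rule fext_superset[OF f]) (auto simp: supp_def)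
  moreover have "fext X \<phi> = (\<lambda>q. \<Sum>p\<in>?S. X p * \<phi> p q)"
    by (rule fext_superset[OF f]) auto
  moreover have "fext Y \<phi> = (\<lambda>q. \<Sum>p\<in>?S. Y p * \<phi> p q)"
    by (rule fext_superset[OF f]) auto
  ultimately show ?thesis by (simp add: distrib_right sum.distrib)
qed

lemma fext_diff:
  assumes "fsupp X" "fsupp Y"
  shows "fext (\<lambda>p. X p - Y p) \<phi> = (\<lambda>q. fext X \<phi> q - fext Y \<phi> q)"
proof -
  let ?S = "supp X \<union> supp Y"
  have f: "finite ?S" using assms by (simp add: fsupp_def)
  have "fext (\<lambda>p. X p - Y p) \<phi> = (\<lambda>q. \<Sum>p\<in>?S. (X p - Y p) * \<phi> p q)"
    by (rule fext_superset[OF f]) (auto simp: supp_def)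
  moreover have "fext X \<phi> = (\<lambda>q. \<Sum>p\<in>?S. X p * \<phi> p q)"
    by (rule fext_superset[OF f]) auto
  moreover have "fext Y \<phi> = (\<lambda>q. \<Sum>p\<in>?S. Y p * \<phi> p q)"
    by (rule fext_superset[OF f]) auto
  ultimately show ?thesis by (simp add: left_diff_distrib sum_subtractf)
qed

lemma fext_smul:
  assumes "fsupp X"
  shows "fext (\<lambda>p. a * X p) \<phi> = (\<lambda>q. a * fext X \<phi> q)"
proof -
  have f: "finite (supp X)" using assms by (simp add: fsupp_def)
  have "fext (\<lambda>p. a * X p) \<phi> = (\<lambda>q. \<Sum>p\<in>supp X. (a * X p) * \<phi> p q)"
    by (rule fext_superset[OF f]) (auto simp: supp_def)
  moreover have "fext X \<phi> = (\<lambda>q. \<Sum>p\<in>supp X. X p * \<phi> p q)"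
    by (rule fext_superset[OF f]) auto
  ultimately show ?thesis by (simp add: sum_distrib_left mult.assoc)
qed

lemma fext_zero[simp]: "fext (\<lambda>_. 0) \<phi> = (\<lambda>_. 0)"
  by (simp add: fext_def supp_def)

lemma supp_fext: "supp (fext X \<phi>) \<subseteq> (\<Union>p\<in>supp X. supp (\<phi> p))"
proof
  fix q assume "q \<in> supp (fext X \<phi>)"
  hence "(\<Sum>p\<in>supp X. X p * \<phi> p q) \<noteq> 0" by (simp add: supp_def fext_def)
  then obtain p where "p \<in> supp X" "X p * \<phi> p q \<noteq> 0" by (meson sum.neutral)
  thus "q \<in> (\<Union>p\<in>supp X. supp (\<phi> p))" by (auto simp: supp_def)
qed

lemma fsupp_fext:
  assumes "fsupp X" "\<forall>p\<in>supp X. fsupp (\<phi> p)"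
  shows "fsupp (fext X \<phi>)"
  using assms supp_fext[of X \<phi>] unfolding fsupp_def
  by (meson finite_UN_I finite_subset)

lemma fext_fext:
  assumes "fsupp X" "\<forall>p\<in>supp X. fsupp (\<phi> p)"
  shows "fext (fext X \<phi>) \<psi> = fext X (\<lambda>p. fext (\<phi> p) \<psi>)"
proof
  fix q
  let ?S = "\<Union>p\<in>supp X. supp (\<phi> p)"
  have f: "finite ?S" using assms by (auto simp: fsupp_def)
  have "fext (fext X \<phi>) \<psi> q = (\<Sum>r\<in>?S. fext X \<phi> r * \<psi> r q)"
    using fext_superset[OF f supp_fext] by metis
  also have "\<dots> = (\<Sum>r\<in>?S. \<Sum>p\<in>supp X. X p * \<phi> p r * \<psi> r q)"
    by (simp add: fext_def sum_distrib_right)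
  also have "\<dots> = (\<Sum>p\<in>supp X. X p * (\<Sum>r\<in>?S. \<phi> p r * \<psi> r q))"
    by (subst sum.swap) (simp add: sum_distrib_left mult.assoc)
  also have "\<dots> = (\<Sum>p\<in>supp X. X p * fext (\<phi> p) \<psi> q)"
  proof (rule sum.cong[OF refl])
    fix p assume p: "p \<in> supp X"
    have "fext (\<phi> p) \<psi> = (\<lambda>q. \<Sum>r\<in>?S. \<phi> p r * \<psi> r q)"
      by (rule fext_superset[OF f]) (use p in auto)
    thus "X p * (\<Sum>r\<in>?S. \<phi> p r * \<psi> r q) = X p * fext (\<phi> p) \<psi> q" by simp
  qed
  also have "\<dots> = fext X (\<lambda>p. fext (\<phi> p) \<psi>) q" by (simp add: fext_def)
  finally show "fext (fext X \<phi>) \<psi> q = fext X (\<lambda>p. fext (\<phi> p) \<psi>) q" .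
qed

lemma rel_sum:
  assumes "finite S" "\<forall>p\<in>S. d p \<in> tens2_rel sA sB"
  shows "(\<lambda>q. \<Sum>p\<in>S. a p * d p q) \<in> tens2_rel sA sB"
  using assms
proof (induction S rule: finite_induct)
  case empty
  then show ?case by (simp add: tens2_rel.zero)
next
  case (insert x F)
  have "(\<lambda>q. a x * d x q + (\<Sum>p\<in>F. a p * d p q)) \<in> tens2_rel sA sB"
    using insert by (intro tens2_rel.add tens2_rel.smul) auto
  thus ?case using insert by simp
qed

lemma fext_cong_rel:
  assumes "\<forall>p\<in>supp X. tens2_eq sA sB (\<phi> p) (\<psi> p)"
  shows "tens2_eq sA sB (fext X \<phi>) (fext X \<psi>)"
proof (cases "finite (supp X)")
  case True
  have "(\<lambda>q. \<Sum>p\<in>supp X. X p * (\<phi> p q - \<psi> p q)) \<in> tens2_rel sA sB"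
    using rel_sum[OF True, of "\<lambda>p q. \<phi> p q - \<psi> p q" sA sB X] assms
    by (simp add: tens2_eq_def)
  thus ?thesis by (simp add: tens2_eq_def fext_def right_diff_distrib sum_subtractf)
next
  case False
  thus ?thesis by (simp add: tens2_eq_def fext_def tens2_rel.zero)
qed

lemma tens2_eq_sym:
  assumes "tens2_eq sA sB f g" shows "tens2_eq sA sB g f"
proof -
  have "(\<lambda>p. (-1) * (f p - g p)) \<in> tens2_rel sA sB"
    using assms tens2_rel.smul unfolding tens2_eq_def by blast
  thus ?thesis by (simp add: tens2_eq_def)
qed

lemma tens2_eq_trans:
  assumes "tens2_eq sA sB f g" "tens2_eq sA sB g h" shows "tens2_eq sA sB f h"
proof -
  have "(\<lambda>p. (f p - g p) + (g p - h p)) \<in> tens2_rel sA sB"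
    using assms tens2_rel.add unfolding tens2_eq_def by blast
  thus ?thesis by (simp add: tens2_eq_def)
qed


lemma fsupp_diff3: "fsupp (\<lambda>p. bas u p - bas v p - bas w p :: 'k::comm_ring_1)"
proof -
  have "supp (\<lambda>p. bas u p - bas v p - bas w p :: 'k) \<subseteq> {u, v, w}"
    by (auto simp: supp_def bas_def)
  thus ?thesis unfolding fsupp_def by (meson finite.emptyI finite.insertI finite_subset)
qed

lemma fsupp_diff2: "fsupp (\<lambda>p. bas u p - a * bas v p :: 'k::comm_ring_1)"
proof -
  have "supp (\<lambda>p. bas u p - a * bas v p :: 'k) \<subseteq> {u, v}"
    by (auto simp: supp_def bas_def)
  thus ?thesis unfolding fsupp_def by (meson finite.emptyI finite.insertI finite_subset)
qed

lemma fsupp_add: "fsupp (f :: _ \<Rightarrow> 'k::comm_ring_1) \<Longrightarrow> fsupp g \<Longrightarrow> fsupp (\<lambda>p. f p + g p)"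
  unfolding fsupp_def supp_def
  by (rule finite_subset[of _ "{p. f p \<noteq> 0} \<union> {p. g p \<noteq> 0}"]) auto

lemma fsupp_diff: "fsupp (f :: _ \<Rightarrow> 'k::comm_ring_1) \<Longrightarrow> fsupp g \<Longrightarrow> fsupp (\<lambda>p. f p - g p)"
  unfolding fsupp_def supp_def
  by (rule finite_subset[of _ "{p. f p \<noteq> 0} \<union> {p. g p \<noteq> 0}"]) auto

lemma fsupp_smul: "fsupp (f :: _ \<Rightarrow> 'k::comm_ring_1) \<Longrightarrow> fsupp (\<lambda>p. a * f p)"
  unfolding fsupp_def supp_def
  by (rule finite_subset[of _ "{p. f p \<noteq> 0}"]) auto

lemma push_rel:
  fixes f :: "'a::ab_group_add \<Rightarrow> 'a2::ab_group_add" and g :: "'b::ab_group_add \<Rightarrow> 'b2::ab_group_add"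
  assumes fa: "\<And>x x'. f (x + x') = f x + f x'" and fs: "\<And>a x. f (sA a x) = sP a (f x)"
    and ga: "\<And>y y'. g (y + y') = g y + g y'" and gs: "\<And>a y. g (sB a y) = sQ a (g y)"
  assumes "r \<in> tens2_rel sA sB"
  shows "fsupp r \<and> fext r (\<lambda>(x, y). bas (f x, g y)) \<in> tens2_rel sP sQ"
  using assms(5)
proof (induction rule: tens2_rel.induct)
  case zero
  then show ?case by (simp add: fsupp_def supp_def tens2_rel.zero)
next
  case (addL x x' y)
  show ?case using fsupp_diff3
    by (simp add: fext_diff fsupp_diff fa tens2_rel.addL)
next
  case (addR x y y')
  show ?case using fsupp_diff3
    by (simp add: fext_diff fsupp_diff ga tens2_rel.addR)
next
  case (smulL a x y)
  show ?case using fsupp_diff2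
    by (simp add: fext_diff fext_smul fsupp_smul fs tens2_rel.smulL)
next
  case (smulR x a y)
  show ?case using fsupp_diff2
    by (simp add: fext_diff fext_smul fsupp_smul gs tens2_rel.smulR)
next
  case (add f g)
  then show ?case by (simp add: fext_add fsupp_add tens2_rel.add)
next
  case (smul f a)
  then show ?case by (simp add: fext_smul fsupp_smul tens2_rel.smul)
qed

lemma key:
  fixes f :: "'a::ab_group_add \<Rightarrow> 'a2::ab_group_add" and g :: "'b::ab_group_add \<Rightarrow> 'b2::ab_group_add"
    and D :: "'a \<times> 'b \<Rightarrow> 'k::field"
  assumes fa: "\<And>x x'. f (x + x') = f x + f x'" and fs: "\<And>a x. f (sA a x) = sP a (f x)"
    and ga: "\<And>y y'. g (y + y') = g y + g y'" and gs: "\<And>a y. g (sB a y) = sQ a (g y)"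
    and D: "fsupp D" and D': "fsupp D'"
    and rel: "tens2_eq sA sB D' (tmap2 A B D)"
  shows "tens2_eq sP sQ (fext D (\<lambda>(x, y). bas (f (A x), g (B y))))
                          (fext D' (\<lambda>(x, y). bas (f x, g y)))"
proof -
  define Q where "Q = (\<lambda>(x, y). bas (f x, g y) :: 'a2 \<times> 'b2 \<Rightarrow> 'k)"
  have T: "fsupp (tmap2 A B D)" unfolding tmap2_def
    by (rule fsupp_fext[OF D]) (simp add: case_prod_beta)
  have 0: "fext (\<lambda>p. D' p - tmap2 A B D p) Q \<in> tens2_rel sP sQ"
    unfolding Q_def
    using push_rel[where f=f and g=g and sA=sA and sB=sB and sP=sP and sQ=sQ
       and r="\<lambda>p. D' p - tmap2 A B D p", OF fa fs ga gs] rel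
    unfolding tens2_eq_def by blast
  have 1: "(\<lambda>q. fext D' Q q - fext (tmap2 A B D) Q q) \<in> tens2_rel sP sQ"
    using 0 unfolding fext_diff[OF D' T] .
  have "fext (tmap2 A B D) Q = fext D (\<lambda>p. fext ((\<lambda>(x, y). bas (A x, B y)) p) Q)"
    unfolding tmap2_def by (rule fext_fext[OF D]) (simp add: case_prod_beta)
  also have "\<dots> = fext D (\<lambda>(x, y). bas (f (A x), g (B y)))"
    unfolding Q_def by (simp add: case_prod_unfold)
  finally have "tens2_eq sP sQ (fext D' Q) (fext D (\<lambda>(x, y). bas (f (A x), g (B y))))"
    using 1 unfolding tens2_eq_def by simp
  thus ?thesis unfolding Q_def by (rule tens2_eq_sym)
qed


lemma cong2:
  assumes "\<And>h c h' c'. tens2_eq sA sB (F h c h' c') (G h c h' c')"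
  shows "tens2_eq sA sB (fext X (\<lambda>(h, c). fext Y (\<lambda>(h', c'). F h c h' c')))
                        (fext X (\<lambda>(h, c). fext Y (\<lambda>(h', c'). G h c h' c')))"
  by (rule fext_cong_rel) (auto split: prod.splits intro!: fext_cong_rel assms)

lemma tmap_smash:
  assumes fX: "fsupp X" and fY: "fsupp Y" and fD: "\<And>h. fsupp (Delta h)"
  shows "tmap2 A B (smash_mult Delta act X Y) =
    fext X (\<lambda>(h, c). fext Y (\<lambda>(h', c'). fext (Delta h') (\<lambda>(x, y). bas (A (h * x), B (act c y * c')))))"
  unfolding smash_mult_def tmap2_def
  using fX fY fD by (simp add: fext_fext fsupp_fext case_prod_unfold)

lemma smash_tmap:
  assumes fX: "fsupp X" and fY: "fsupp Y" and fD: "\<And>h. fsupp (Delta h)"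
  shows "smash_mult Delta act (tmap2 A B X) (tmap2 A B Y) =
    fext X (\<lambda>(h, c). fext Y (\<lambda>(h', c'). fext (Delta (A h')) (\<lambda>(x, y). bas (A h * x, act (B c) y * B c'))))"
  unfolding smash_mult_def tmap2_def
  using fX fY fD by (simp add: fext_fext fsupp_fext case_prod_unfold)


theorem proposition3p14:
  fixes sH :: "'k::field \<Rightarrow> 'h::ring \<Rightarrow> 'h"
    and sC :: "'k \<Rightarrow> 'c::ring \<Rightarrow> 'c"
    and Delta :: "'h \<Rightarrow> ('h \<times> 'h \<Rightarrow> 'k)"
    and act :: "'c \<Rightarrow> 'h \<Rightarrow> 'c"
    and \<alpha>H :: "'h \<Rightarrow> 'h" and \<alpha>C :: "'c \<Rightarrow> 'c"
  assumes bialg: "bialgebra sH Delta"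
    and modalg: "right_module_algebra sH Delta sC act"
    and endoH: "bialg_endo sH Delta \<alpha>H" and bijH: "bij \<alpha>H"
    and endoC: "alg_endo sC \<alpha>C" and bijC: "bij \<alpha>C"
    and compat: "\<And>c h. \<alpha>C (act c h) = act (\<alpha>C c) (\<alpha>H h)"
  shows "\<forall>X Y. fsupp X \<longrightarrow> fsupp Y \<longrightarrow>
           tens2_eq sH sC (tmap2 \<alpha>H \<alpha>C (smash_mult Delta act X Y))
                          (smash_mult Delta act (tmap2 \<alpha>H \<alpha>C X) (tmap2 \<alpha>H \<alpha>C Y))
         \<and> tens2_eq sH sC (tmap2 \<alpha>H \<alpha>C (smash_mult Delta act X Y))
                          (hom_smash_mult (\<lambda>x y. \<alpha>H (x * y)) (\<lambda>h. Delta (\<alpha>H h)) \<alpha>H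
                                          (\<lambda>x y. \<alpha>C (x * y)) \<alpha>C (\<lambda>c h. \<alpha>C (act c h)) X Y)"
proof (intro allI impI)
  fix X Y :: "'h \<times> 'c \<Rightarrow> 'k"
  assume fX: "fsupp X" and fY: "fsupp Y"
  define A where "A = \<alpha>H"
  define B where "B = \<alpha>C"
  have kH: "kalgebra sH" using bialg by (simp add: bialgebra_def)
  have kC: "kalgebra sC" using modalg by (simp add: right_module_algebra_def)
  have fD: "\<And>h. fsupp (Delta h)" using bialg by (simp add: bialgebra_def)
  have Dcomm: "\<And>h. tens2_eq sH sH (Delta (A h)) (tmap2 A A (Delta h))"
    using endoH by (simp add: bialg_endo_def A_def)
  have Aadd: "\<And>x y. A (x + y) = A x + A y" and Asc: "\<And>a x. A (sH a x) = sH a (A x)"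
    and Amul: "\<And>x y. A (x * y) = A x * A y"
    using endoH by (auto simp: bialg_endo_def Vector_Spaces.linear_iff A_def)
  have Badd: "\<And>x y. B (x + y) = B x + B y" and Bsc: "\<And>a x. B (sC a x) = sC a (B x)"
    and Bmul: "\<And>x y. B (x * y) = B x * B y"
    using endoC by (auto simp: alg_endo_def Vector_Spaces.linear_iff B_def)
  have AinvA: "\<And>x. inv A (A x) = x" using bijH unfolding A_def by (simp add: bij_is_inj)
  have AAinv: "\<And>x. A (inv A x) = x" using bijH unfolding A_def by (meson bij_inv_eq_iff)
  have BBinv: "\<And>x. B (inv B x) = x" using bijC unfolding B_def by (meson bij_inv_eq_iff)
  have Iadd: "\<And>x y. inv A (x + y) = inv A x + inv A y"
    by (metis AinvA AAinv Aadd)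
  have Isc: "\<And>a x. inv A (sH a x) = sH a (inv A x)"
    by (metis AinvA AAinv Asc)
  have actadd: "\<And>c h h'. act c (h + h') = act c h + act c h'"
    and actsc: "\<And>a c h. act c (sH a h) = sC a (act c h)"
    using modalg by (auto simp: right_module_algebra_def)
  have mulL: "\<And>a x y. sH a (x * y) = x * sH a y"
    and mulLC: "\<And>a x y. sC a (x * y) = sC a x * y"
    using kH kC unfolding kalgebra_def by blast+
  have cmp: "\<And>c h. B (act c h) = act (B c) (A h)" using compat by (simp add: A_def B_def)
  have per1: "tens2_eq sH sC
      (fext (Delta h') (\<lambda>(x, y). bas (A (h * x), B (act c y * c'))))
      (fext (Delta (A h')) (\<lambda>(x, y). bas (A h * x, act (B c) y * B c')))" for h c h' c'
  proof -
    have K: "tens2_eq sH sC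
      (fext (Delta h') (\<lambda>(x, y). bas ((\<lambda>x. A h * x) (A x), (\<lambda>y. act (B c) y * B c') (A y))))
      (fext (Delta (A h')) (\<lambda>(x, y). bas ((\<lambda>x. A h * x) x, (\<lambda>y. act (B c) y * B c') y)))"
      by (rule key[OF _ _ _ _ fD fD Dcomm])
         (simp_all add: distrib_left distrib_right actadd actsc mulL mulLC)
    have E: "(\<lambda>(x, y). bas ((\<lambda>x. A h * x) (A x), (\<lambda>y. act (B c) y * B c') (A y)))
        = (\<lambda>(x, y). bas (A (h * x), B (act c y * c')))"
      by (simp add: Amul Bmul cmp)
    show ?thesis using K unfolding E .
  qed
  have per2: "tens2_eq sH sC
      (fext (Delta h') (\<lambda>(x, y). bas (A (h * x), B (act c y * c'))))
      (fext (Delta (A h')) (\<lambda>(x, y). bas (A h * x, B (act c (inv A y) * c'))))" for h c h' c'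
  proof -
    have K: "tens2_eq sH sC
      (fext (Delta h') (\<lambda>(x, y). bas ((\<lambda>x. A h * x) (A x), (\<lambda>y. B (act c (inv A y) * c')) (A y))))
      (fext (Delta (A h')) (\<lambda>(x, y). bas ((\<lambda>x. A h * x) x, (\<lambda>y. B (act c (inv A y) * c')) y)))"
      by (rule key[OF _ _ _ _ fD fD Dcomm])
         (simp_all add: distrib_left distrib_right actadd actsc mulL mulLC[symmetric] Iadd Isc Badd Bsc)
    have E: "(\<lambda>(x, y). bas ((\<lambda>x. A h * x) (A x), (\<lambda>y. B (act c (inv A y) * c')) (A y)))
        = (\<lambda>(x, y). bas (A (h * x), B (act c y * c')))"
      by (simp add: Amul AinvA)
    show ?thesis using K unfolding E .
  qed
  have L: "tmap2 A B (smash_mult Delta act X Y) =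
    fext X (\<lambda>(h, c). fext Y (\<lambda>(h', c'). fext (Delta h') (\<lambda>(x, y). bas (A (h * x), B (act c y * c')))))"
    by (rule tmap_smash[OF fX fY fD])
  have R1: "smash_mult Delta act (tmap2 A B X) (tmap2 A B Y) =
    fext X (\<lambda>(h, c). fext Y (\<lambda>(h', c'). fext (Delta (A h')) (\<lambda>(x, y). bas (A h * x, act (B c) y * B c'))))"
    by (rule smash_tmap[OF fX fY fD])
  have R2: "hom_smash_mult (\<lambda>x y. A (x * y)) (\<lambda>h. Delta (A h)) A
                 (\<lambda>x y. B (x * y)) B (\<lambda>c h. B (act c h)) X Y =
    fext X (\<lambda>(h, c). fext Y (\<lambda>(h', c'). fext (Delta (A h')) (\<lambda>(x, y). bas (A h * x, B (act c (inv A y) * c')))))"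
    unfolding hom_smash_mult_def by (simp add: Amul AAinv cmp BBinv)
  show "tens2_eq sH sC (tmap2 \<alpha>H \<alpha>C (smash_mult Delta act X Y))
                          (smash_mult Delta act (tmap2 \<alpha>H \<alpha>C X) (tmap2 \<alpha>H \<alpha>C Y))
         \<and> tens2_eq sH sC (tmap2 \<alpha>H \<alpha>C (smash_mult Delta act X Y))
                          (hom_smash_mult (\<lambda>x y. \<alpha>H (x * y)) (\<lambda>h. Delta (\<alpha>H h)) \<alpha>H
                                          (\<lambda>x y. \<alpha>C (x * y)) \<alpha>C (\<lambda>c h. \<alpha>C (act c h)) X Y)"
    unfolding A_def[symmetric] B_def[symmetric] L R1 R2
    by (intro conjI; rule cong2; rule per1 per2)
qed

end
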